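(* Suppose the bornology of a large scale group $G$ has a countable basis. If $G$ is unbounded and locally bounded, then $G$ has infinitely many ends.
   Context: A large scale group is a group $G$ with a bornology $\mathcal B$ (a cover of $G$ closed under subsets and finite unions) closed under inverses and products; uniformly bounded covers are those refining $\{gB\}_{g\in G}$ for some $B\in\mathcal B$; bounded sets are members of $\mathcal B$; a basis of $\mathcal B$ is a subfamily such that each member of $\mathcal B$ lies in a member of it. $G$ is locally bounded if for every bounded $B\subseteq G$ the subgroup $\langle B\rangle$ generated by $B$ is bounded. For $A\subseteq G$ and a cover $\mathcal U$, $st(A,\mathcal U)$ is the union of the members of $\mathcal U$ meeting $A$. $A$ is coarsely clopen if $st(A,\mathcal U)\cap st(G\setminus A,\mathcal U)$ is bounded for every uniformly bounded $\mathcal U$. An end of $G$ is a family of unbounded coarsely clopen subsets of $G$ maximal with respect to the property that all finite intersections of its members are unbounded. *)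

theory Defs
  imports Main "HOL-Library.Countable_Set"
begin

text \<open>A large scale group: the group is the type 'a (class group_add, written additively,
not necessarily commutative), equipped with a bornology Bd :: 'a set set.\<close>

definition bornology :: "'a set set \<Rightarrow> bool" where
  "bornology Bd \<longleftrightarrow> \<Union>Bd = UNIV
     \<and> (\<forall>A\<in>Bd. \<forall>C. C \<subseteq> A \<longrightarrow> C \<in> Bd)
     \<and> (\<forall>A\<in>Bd. \<forall>C\<in>Bd. A \<union> C \<in> Bd)"

definition large_scale_group :: "('a::group_add) set set \<Rightarrow> bool" where
  "large_scale_group Bd \<longleftrightarrow> bornology Bd
     \<and> (\<forall>A\<in>Bd. uminus ` A \<in> Bd)
     \<and> (\<forall>A\<in>Bd. \<forall>C\<in>Bd. {a + c | a c. a \<in> A \<and> c \<in> C} \<in> Bd)"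

definition uniformly_bounded :: "('a::group_add) set set \<Rightarrow> 'a set set \<Rightarrow> bool" where
  "uniformly_bounded Bd U \<longleftrightarrow> \<Union>U = UNIV
     \<and> (\<exists>B\<in>Bd. \<forall>V\<in>U. \<exists>g. V \<subseteq> (\<lambda>x. g + x) ` B)"

definition star :: "'a set \<Rightarrow> 'a set set \<Rightarrow> 'a set" where
  "star A U = \<Union>{V\<in>U. V \<inter> A \<noteq> {}}"

definition coarsely_clopen :: "('a::group_add) set set \<Rightarrow> 'a set \<Rightarrow> bool" where
  "coarsely_clopen Bd A \<longleftrightarrow>
     (\<forall>U. uniformly_bounded Bd U \<longrightarrow> star A U \<inter> star (- A) U \<in> Bd)"

definition end_candidate :: "('a::group_add) set set \<Rightarrow> 'a set set \<Rightarrow> bool" where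
  "end_candidate Bd E \<longleftrightarrow>
     (\<forall>A\<in>E. A \<notin> Bd \<and> coarsely_clopen Bd A)
     \<and> (\<forall>F. F \<subseteq> E \<and> finite F \<and> F \<noteq> {} \<longrightarrow> \<Inter>F \<notin> Bd)"

definition is_end :: "('a::group_add) set set \<Rightarrow> 'a set set \<Rightarrow> bool" where
  "is_end Bd E \<longleftrightarrow> end_candidate Bd E
     \<and> (\<forall>E'. end_candidate Bd E' \<and> E \<subseteq> E' \<longrightarrow> E' = E)"

definition ends :: "('a::group_add) set set \<Rightarrow> 'a set set set" where
  "ends Bd = {E. is_end Bd E}"

definition is_add_subgroup :: "('a::group_add) set \<Rightarrow> bool" where
  "is_add_subgroup H \<longleftrightarrow> 0 \<in> H \<and> (\<forall>x\<in>H. \<forall>y\<in>H. x + y \<in> H) \<and> (\<forall>x\<in>H. - x \<in> H)"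

definition generated_subgroup :: "('a::group_add) set \<Rightarrow> 'a set" where
  "generated_subgroup A = \<Inter>{H. is_add_subgroup H \<and> A \<subseteq> H}"

definition locally_bounded :: "('a::group_add) set set \<Rightarrow> bool" where
  "locally_bounded Bd \<longleftrightarrow> (\<forall>B\<in>Bd. generated_subgroup B \<in> Bd)"

definition has_countable_basis :: "'a set set \<Rightarrow> bool" where
  "has_countable_basis Bd \<longleftrightarrow>
     (\<exists>C. countable C \<and> C \<subseteq> Bd \<and> (\<forall>A\<in>Bd. \<exists>D\<in>C. A \<subseteq> D))"

end

theory Submission
  imports Defs "HOL-Library.Infinite_Set" "HOL-Library.Nat_Bijection"
begin

lemma gs_sub: "is_add_subgroup (generated_subgroup A)"
  unfolding generated_subgroup_def is_add_subgroup_def by auto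

lemma gs_incl: "A \<subseteq> generated_subgroup A"
  unfolding generated_subgroup_def by auto

lemma gs_mono: "A \<subseteq> B \<Longrightarrow> generated_subgroup A \<subseteq> generated_subgroup B"
  unfolding generated_subgroup_def by auto

lemma born_sub: "bornology Bd \<Longrightarrow> A \<in> Bd \<Longrightarrow> C \<subseteq> A \<Longrightarrow> C \<in> Bd"
  unfolding bornology_def by simp

lemma born_un: "bornology Bd \<Longrightarrow> A \<in> Bd \<Longrightarrow> C \<in> Bd \<Longrightarrow> A \<union> C \<in> Bd"
  unfolding bornology_def by simp

lemma born_single: "bornology Bd \<Longrightarrow> {x} \<in> Bd"
proof -
  assume b: "bornology Bd"
  then have "x \<in> \<Union>Bd" unfolding bornology_def by simp
  then obtain A where "A \<in> Bd" "x \<in> A" by blast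
  then show ?thesis using born_sub[OF b] by blast
qed

lemma born_empty: "bornology Bd \<Longrightarrow> {} \<in> Bd"
  by (rule born_sub[OF _ born_single[of Bd undefined]]) auto

lemma born_finun: "bornology Bd \<Longrightarrow> (\<forall>i\<le>(n::nat). f i \<in> Bd) \<Longrightarrow> (\<Union>i\<le>n. f i) \<in> Bd"
proof (induction n)
  case 0
  then show ?case by simp
next
  case (Suc n)
  then show ?case by (simp add: atMost_Suc born_un)
qed

lemma end_exists:
  assumes "A \<notin> Bd" "coarsely_clopen Bd A"
  shows "\<exists>E. is_end Bd E \<and> A \<in> E"
proof -
  define S where "S = {E. end_candidate Bd E \<and> A \<in> E}"
  have cand1: "{A} \<in> S"
    unfolding S_def end_candidate_def using assms
    by (auto simp: subset_singleton_iff)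
  have "\<forall>C\<in>chains S. \<exists>U\<in>S. \<forall>X\<in>C. X \<subseteq> U"
  proof
    fix C assume C: "C \<in> chains S"
    show "\<exists>U\<in>S. \<forall>X\<in>C. X \<subseteq> U"
    proof (cases "C = {}")
      case True then show ?thesis using cand1 by auto
    next
      case False
      have CS: "C \<subseteq> S" and ch: "subset.chain S C" using C unfolding chains_alt_def subset.chain_def by auto
      have c1: "\<forall>X\<in>\<Union>C. X \<notin> Bd \<and> coarsely_clopen Bd X"
        using CS unfolding S_def end_candidate_def by blast
      have c2: "\<forall>F. F \<subseteq> \<Union>C \<and> finite F \<and> F \<noteq> {} \<longrightarrow> \<Inter>F \<notin> Bd"
      proof (intro allI impI)
        fix F assume F: "F \<subseteq> \<Union>C \<and> finite F \<and> F \<noteq> {}"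
        then obtain E where "E \<in> C" "F \<subseteq> E"
          using finite_subset_Union_chain[of F C S] False ch by blast
        then show "\<Inter>F \<notin> Bd" using CS F unfolding S_def end_candidate_def by auto
      qed
      have c3: "A \<in> \<Union>C" using False CS unfolding S_def by auto
      have "\<Union>C \<in> S" unfolding S_def end_candidate_def using c1 c2 c3 by blast
      then show ?thesis by auto
    qed
  qed
  then obtain M where M: "M \<in> S" "\<forall>X\<in>S. M \<subseteq> X \<longrightarrow> X = M"
    using Zorn_Lemma2[of S] by blast
  have "is_end Bd M"
    unfolding is_end_def using M unfolding S_def by auto
  then show ?thesis using M unfolding S_def by auto
qed

theorem proposition9p2:
  fixes Bd :: "('a::group_add) set set"
  assumes "large_scale_group Bd"
    and "has_countable_basis Bd"
    and "UNIV \<notin> Bd"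
    and "locally_bounded Bd"
  shows "infinite (ends Bd)"
proof -
  have born: "bornology Bd" using assms(1) unfolding large_scale_group_def by auto
  obtain C where C: "countable C" "C \<subseteq> Bd" "\<forall>A\<in>Bd. \<exists>D\<in>C. A \<subseteq> D"
    using assms(2) unfolding has_countable_basis_def by blast
  have Cne: "C \<noteq> {}" using C(3) born_empty[OF born] by auto
  define f where "f = from_nat_into C"
  have fC: "f i \<in> C" for i unfolding f_def using Cne by (simp add: from_nat_into)
  have fall: "\<forall>D\<in>C. \<exists>i. D = f i" unfolding f_def using C(1) by (metis from_nat_into_surj)
  define K where "K n = generated_subgroup (\<Union>i\<le>n. f i)" for n
  have Kbd: "K n \<in> Bd" for n
  proof -
    have "\<forall>i\<le>n. f i \<in> Bd" using fC C(2) by blast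
    then have "(\<Union>i\<le>n. f i) \<in> Bd" by (rule born_finun[OF born])
    then show ?thesis using assms(4) unfolding K_def locally_bounded_def by simp
  qed
  have Kmono: "m \<le> n \<Longrightarrow> K m \<subseteq> K n" for m n
    unfolding K_def by (intro gs_mono UN_mono) auto
  have Ksub: "is_add_subgroup (K n)" for n unfolding K_def by (rule gs_sub)
  have Kcov: "\<exists>n. B \<subseteq> K n" if hB: "B \<in> Bd" for B
  proof -
    obtain D where D: "D \<in> C" "B \<subseteq> D" using bspec[OF C(3) hB] by (elim bexE)
    obtain i where i: "D = f i" using bspec[OF fall D(1)] by (elim exE)
    have "f i \<subseteq> K i" unfolding K_def
      by (rule order_trans[OF _ gs_incl]) auto
    then have "B \<subseteq> K i" using D(2) i by (rule_tac order_trans) simp_all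
    then show ?thesis by (rule exI)
  qed
  have Kex: "\<exists>n. x \<in> K n" for x
  proof -
    obtain n where "{x} \<subseteq> K n" using Kcov[OF born_single[OF born, of x]] by blast
    then show ?thesis by blast
  qed
  define lev where "lev x = (LEAST n. x \<in> K n)" for x
  have levin: "x \<in> K (lev x)" for x unfolding lev_def using Kex[of x] by (rule LeastI_ex)
  have levle: "x \<in> K n \<Longrightarrow> lev x \<le> n" for x n unfolding lev_def by (rule Least_le)
  have levkey: "lev (y + h) = lev y" if h: "h \<in> K m" and ly: "m < lev y" for y h m
  proof -
    have "h \<in> K (lev y)" using h Kmono[of m "lev y"] ly by auto
    then have "y + h \<in> K (lev y)" using levin Ksub unfolding is_add_subgroup_def by blast
    then have le: "lev (y + h) \<le> lev y" by (rule levle)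
    have "\<not> lev (y + h) < lev y"
    proof
      assume lt: "lev (y + h) < lev y"
      define M where "M = max (lev (y + h)) m"
      have "y + h \<in> K M" using levin[of "y + h"] Kmono[of "lev (y + h)" M] unfolding M_def by auto
      moreover have "h \<in> K M" using h Kmono[of m M] unfolding M_def by auto
      then have "- h \<in> K M" using Ksub[of M] unfolding is_add_subgroup_def by blast
      ultimately have "(y + h) + - h \<in> K M" using Ksub unfolding is_add_subgroup_def by blast
      then have "y \<in> K M" by (simp add: add.assoc)
      then have "lev y \<le> M" by (rule levle)
      then show False using lt ly unfolding M_def by auto
    qed
    then show ?thesis using le by auto
  qed
  have clopen: "coarsely_clopen Bd {x. P (lev x)}" for P
    unfolding coarsely_clopen_def
  proof (intro allI impI)
    fix U assume "uniformly_bounded Bd U"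
    then obtain B where B: "B \<in> Bd" "\<forall>V\<in>U. \<exists>g. V \<subseteq> (\<lambda>x. g + x) ` B"
      unfolding uniformly_bounded_def by blast
    obtain m where m: "B \<subseteq> K m" using Kcov B(1) by blast
    have near: "\<exists>h\<in>K m. z = y + h" if hV: "V \<in> U" "y \<in> V" "z \<in> V" for V y z
    proof -
      obtain g where "V \<subseteq> (\<lambda>x. g + x) ` B" using B(2) \<open>V \<in> U\<close> by blast
      then obtain b b' where bb: "b \<in> B" "b' \<in> B" "y = g + b" "z = g + b'" using hV by blast
      have "- b + b' \<in> K m" using m bb Ksub unfolding is_add_subgroup_def by blast
      moreover have "z = y + (- b + b')" using bb by (simp add: add.assoc[symmetric])
      ultimately show ?thesis by blast
    qed
    have "star {x. P (lev x)} U \<inter> star (- {x. P (lev x)}) U \<subseteq> K m"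
    proof
      fix y assume "y \<in> star {x. P (lev x)} U \<inter> star (- {x. P (lev x)}) U"
      then obtain V1 V2 a c where V: "V1 \<in> U" "y \<in> V1" "a \<in> V1" "P (lev a)"
        "V2 \<in> U" "y \<in> V2" "c \<in> V2" "\<not> P (lev c)"
        unfolding star_def by blast
      show "y \<in> K m"
      proof (rule ccontr)
        assume "y \<notin> K m"
        then have ly: "m < lev y" using levin[of y] Kmono[of "lev y" m] by (cases "lev y \<le> m") auto
        obtain h where "h \<in> K m" "a = y + h" using near V by blast
        then have "lev a = lev y" using levkey ly by blast
        moreover obtain h' where "h' \<in> K m" "c = y + h'" using near V by blast
        then have "lev c = lev y" using levkey ly by blast
        ultimately show False using V by simp
      qed
    qed
    then show "star {x. P (lev x)} U \<inter> star (- {x. P (lev x)}) U \<in> Bd"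
      using born_sub[OF born Kbd] by blast
  qed
  define L where "L = range lev"
  have Lunb: "\<exists>x. m < lev x" for m
  proof -
    obtain x where "x \<notin> K m" using assms(3) Kbd by (metis UNIV_eq_I)
    then have "m < lev x" using levin[of x] Kmono[of "lev x" m] by (cases "lev x \<le> m") auto
    then show ?thesis by blast
  qed
  have Linf: "infinite L"
    unfolding infinite_nat_iff_unbounded L_def using Lunb by blast
  define A where "A i = {x. \<exists>k. lev x = enumerate L (prod_encode (i, k))}" for i
  have Aunb: "A i \<notin> Bd" for i
  proof
    assume "A i \<in> Bd"
    then obtain m where m: "A i \<subseteq> K m" using Kcov by blast
    have "Suc m \<le> prod_encode (i, Suc m)" using le_prod_encode_2 by simp
    also have "\<dots> \<le> enumerate L (prod_encode (i, Suc m))" using le_enumerate[OF Linf] .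
    finally have m1: "m < enumerate L (prod_encode (i, Suc m))" by simp
    have "enumerate L (prod_encode (i, Suc m)) \<in> L" using enumerate_in_set[OF Linf] .
    then obtain x where x: "lev x = enumerate L (prod_encode (i, Suc m))" unfolding L_def by auto
    then have "x \<in> A i" unfolding A_def by blast
    then have "lev x \<le> m" using m levle by blast
    then show False using m1 x by simp
  qed
  have Acl: "coarsely_clopen Bd (A i)" for i
    using clopen[of "\<lambda>n. \<exists>k. n = enumerate L (prod_encode (i, k))"] unfolding A_def by simp
  have Adisj: "A i \<inter> A j = {}" if "i \<noteq> j" for i j
  proof (rule ccontr)
    assume "A i \<inter> A j \<noteq> {}"
    then obtain x k k' where "lev x = enumerate L (prod_encode (i, k))"
      "lev x = enumerate L (prod_encode (j, k'))" unfolding A_def by blast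
    then have "enumerate L (prod_encode (i, k)) = enumerate L (prod_encode (j, k'))" by simp
    then have "prod_encode (i, k) = prod_encode (j, k')"
      using Linf by (metis enumerate_mono_le_iff order_antisym order_refl)
    then show False using that by simp
  qed
  define E where "E i = (SOME E. is_end Bd E \<and> A i \<in> E)" for i
  have EE: "is_end Bd (E i) \<and> A i \<in> E i" for i
    unfolding E_def using end_exists[OF Aunb Acl] by (rule someI_ex)
  have injE: "inj E"
  proof (rule injI)
    fix i j assume eq: "E i = E j"
    show "i = j"
    proof (rule ccontr)
      assume ne: "i \<noteq> j"
      have "{A i, A j} \<subseteq> E i" using EE eq by auto
      then have "\<Inter>{A i, A j} \<notin> Bd" using EE[of i] unfolding is_end_def end_candidate_def by blast
      then show False using Adisj[OF ne] born_empty[OF born] by simp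
    qed
  qed
  have "range E \<subseteq> ends Bd" using EE unfolding ends_def by auto
  moreover have "infinite (range E)" using injE by (rule range_inj_infinite)
  ultimately show ?thesis using finite_subset by blast
qed

end
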